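(* Let $k\ge0$ be an integer and $t\ge1$ an odd integer. Let $\varphi$ be the endomorphism of $E$ given on generators by $\varphi(e_n)=e_n$ for $1\le n\le k$, $\varphi(e_n)=-e_n$ for $k+1\le n\le k+t$, and $\varphi(e_n)=-e_n+2e_1\cdots e_ke_{k+1}\cdots e_{k+t}e_n$ for $n>k+t$ (this $\varphi$ is an automorphism with $\varphi^2=\mathrm{id}$). Then $E_\varphi$ and $E_k$ are isomorphic as $\mathbb{Z}_2$-graded algebras.
   Context: $F$ is a field of characteristic zero, $L$ an infinite-dimensional $F$-vector space with basis $e_1,e_2,\ldots$, $E$ its Grassmann algebra. $E_\varphi$ is the $\mathbb{Z}_2$-grading on $E$ by the eigenspaces of $\varphi$ for $1$ (degree 0) and $-1$ (degree 1). $E_k$ is the $\mathbb{Z}_2$-grading in which $e_1,\ldots,e_k$ have degree $0$ and all other $e_i$ have degree $1$. *)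

theory Defs
  imports Main
begin

text \<open>An element of E is a finitely supported coefficient function
on monomials; a monomial e_{i_1} ... e_{i_m} (i_1 < ... < i_m) is represented by the
finite set {i_1,...,i_m} of positive naturals.\<close>

definition grass :: "(nat set \<Rightarrow> 'a::field) set" where
  "grass = {x. finite {S. x S \<noteq> 0} \<and> (\<forall>S. x S \<noteq> 0 \<longrightarrow> finite S \<and> 0 \<notin> S)}"

text \<open>Sign of moving the monomial e_S past e_T into increasing order.\<close>
definition gsign :: "nat set \<Rightarrow> nat set \<Rightarrow> 'a::field" where
  "gsign S T = (-1) ^ card {(i,j). i \<in> S \<and> j \<in> T \<and> j < i}"

definition gmult :: "(nat set \<Rightarrow> 'a::field) \<Rightarrow> (nat set \<Rightarrow> 'a) \<Rightarrow> (nat set \<Rightarrow> 'a)" where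
  "gmult x y = (\<lambda>U. if finite U then (\<Sum>S\<in>Pow U. gsign S (U - S) * x S * y (U - S)) else 0)"

definition gadd :: "(nat set \<Rightarrow> 'a::field) \<Rightarrow> (nat set \<Rightarrow> 'a) \<Rightarrow> (nat set \<Rightarrow> 'a)" where
  "gadd x y = (\<lambda>S. x S + y S)"

definition gsmult :: "'a::field \<Rightarrow> (nat set \<Rightarrow> 'a) \<Rightarrow> (nat set \<Rightarrow> 'a)" where
  "gsmult c x = (\<lambda>S. c * x S)"

definition gneg :: "(nat set \<Rightarrow> 'a::field) \<Rightarrow> (nat set \<Rightarrow> 'a)" where
  "gneg x = (\<lambda>S. - x S)"

definition gone :: "nat set \<Rightarrow> 'a::field" where
  "gone = (\<lambda>S. if S = {} then 1 else 0)"

definition gen :: "nat \<Rightarrow> nat set \<Rightarrow> 'a::field" where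
  "gen n = (\<lambda>S. if S = {n} then 1 else 0)"

definition gprod :: "nat list \<Rightarrow> nat set \<Rightarrow> 'a::field" where
  "gprod xs = foldr gmult (map gen xs) gone"

definition grass_endo :: "((nat set \<Rightarrow> 'a::field) \<Rightarrow> (nat set \<Rightarrow> 'a)) \<Rightarrow> bool" where
  "grass_endo f \<longleftrightarrow>
     (\<forall>x\<in>grass. f x \<in> grass) \<and>
     (\<forall>x\<in>grass. \<forall>y\<in>grass. f (gadd x y) = gadd (f x) (f y)) \<and>
     (\<forall>c. \<forall>x\<in>grass. f (gsmult c x) = gsmult c (f x)) \<and>
     (\<forall>x\<in>grass. \<forall>y\<in>grass. f (gmult x y) = gmult (f x) (f y)) \<and>
     f gone = gone"

definition Ephi0 :: "((nat set \<Rightarrow> 'a::field) \<Rightarrow> (nat set \<Rightarrow> 'a)) \<Rightarrow> (nat set \<Rightarrow> 'a) set" where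
  "Ephi0 phi = {x \<in> grass. phi x = x}"

definition Ephi1 :: "((nat set \<Rightarrow> 'a::field) \<Rightarrow> (nat set \<Rightarrow> 'a)) \<Rightarrow> (nat set \<Rightarrow> 'a) set" where
  "Ephi1 phi = {x \<in> grass. phi x = gneg x}"

text \<open>Z_2-grading E_k: e_1..e_k of degree 0, other e_i of degree 1; so a monomial
e_S has degree the parity of the number of its indices greater than k.\<close>
definition Ek0 :: "nat \<Rightarrow> (nat set \<Rightarrow> 'a::field) set" where
  "Ek0 k = {x \<in> grass. \<forall>S. x S \<noteq> 0 \<longrightarrow> even (card {i \<in> S. k < i})}"

definition Ek1 :: "nat \<Rightarrow> (nat set \<Rightarrow> 'a::field) set" where
  "Ek1 k = {x \<in> grass. \<forall>S. x S \<noteq> 0 \<longrightarrow> odd (card {i \<in> S. k < i})}"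

definition graded_iso ::
  "(nat set \<Rightarrow> 'a::field) set \<Rightarrow> (nat set \<Rightarrow> 'a) set \<Rightarrow> (nat set \<Rightarrow> 'a) set \<Rightarrow> (nat set \<Rightarrow> 'a) set
    \<Rightarrow> ((nat set \<Rightarrow> 'a) \<Rightarrow> (nat set \<Rightarrow> 'a)) \<Rightarrow> bool" where
  "graded_iso A0 A1 B0 B1 psi \<longleftrightarrow>
     grass_endo psi \<and> bij_betw psi grass grass \<and> psi ` A0 = B0 \<and> psi ` A1 = B1"

end

theory Submission imports Defs "HOL-Library.Function_Algebras" begin

definition gmono :: "nat set \<Rightarrow> nat set \<Rightarrow> 'a::field" where
  "gmono S = (\<lambda>U. if U = S then 1 else 0)"

lemma sum_fun_apply: "(sum f A) x = sum (\<lambda>i. f i x) A"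
  by (induction A rule: infinite_finite_induct) auto

lemma gadd_plus: "gadd x y = x + y" unfolding gadd_def by (auto simp: fun_eq_iff)

lemma gen_gmono: "gen n = gmono {n}" unfolding gen_def gmono_def by simp
lemma gone_gmono: "gone = gmono {}" unfolding gone_def gmono_def by simp

lemma grass_iff: "x \<in> grass \<longleftrightarrow> finite {S. x S \<noteq> 0} \<and> (\<forall>S. x S \<noteq> 0 \<longrightarrow> finite S \<and> 0 \<notin> S)"
  unfolding grass_def by simp

lemma gmono_grass: "finite S \<Longrightarrow> 0 \<notin> S \<Longrightarrow> gmono S \<in> grass"
  unfolding grass_iff gmono_def by auto

lemma grass_add: "x \<in> grass \<Longrightarrow> y \<in> grass \<Longrightarrow> x + y \<in> grass"
proof -
  assume a: "x \<in> grass" "y \<in> grass"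
  have "{S. (x + y) S \<noteq> 0} \<subseteq> {S. x S \<noteq> 0} \<union> {S. y S \<noteq> 0}" by auto
  with a show ?thesis unfolding grass_iff by (auto intro: finite_subset)
qed

lemma grass_zero: "0 \<in> grass" unfolding grass_iff by auto

lemma grass_sum: "(\<And>i. i \<in> A \<Longrightarrow> f i \<in> grass) \<Longrightarrow> sum f A \<in> grass"
  by (induction A rule: infinite_finite_induct) (auto simp: grass_zero grass_add)

lemma grass_smult: "x \<in> grass \<Longrightarrow> gsmult c x \<in> grass"
proof -
  assume a: "x \<in> grass"
  have "{S. gsmult c x S \<noteq> 0} \<subseteq> {S. x S \<noteq> 0}" by (auto simp: gsmult_def)
  with a show ?thesis unfolding grass_iff by (auto intro: finite_subset simp: gsmult_def)
qed

lemma gmult_support: "gmult x y U \<noteq> 0 \<Longrightarrow> \<exists>S T. x S \<noteq> 0 \<and> y T \<noteq> 0 \<and> U = S \<union> T"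
proof -
  assume "gmult x y U \<noteq> 0"
  then have "finite U" "(\<Sum>S\<in>Pow U. gsign S (U - S) * x S * y (U - S)) \<noteq> 0"
    unfolding gmult_def by (auto split: if_splits)
  then obtain S where "S \<in> Pow U" "gsign S (U - S) * x S * y (U - S) \<noteq> 0"
    using sum.not_neutral_contains_not_neutral by blast
  then show ?thesis by (intro exI[of _ S] exI[of _ "U - S"]) auto
qed

lemma grass_gmult: "x \<in> grass \<Longrightarrow> y \<in> grass \<Longrightarrow> gmult x y \<in> grass"
proof -
  assume a: "x \<in> grass" "y \<in> grass"
  have "{U. gmult x y U \<noteq> 0} \<subseteq> (\<lambda>(S,T). S \<union> T) ` ({S. x S \<noteq> 0} \<times> {T. y T \<noteq> 0})"
    using gmult_support by fastforce
  moreover have "finite ((\<lambda>(S,T). S \<union> T) ` ({S. x S \<noteq> 0} \<times> {T. y T \<noteq> 0}))"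
    using a unfolding grass_iff by auto
  ultimately have "finite {U. gmult x y U \<noteq> 0}" by (rule finite_subset)
  moreover have "\<forall>U. gmult x y U \<noteq> 0 \<longrightarrow> finite U \<and> 0 \<notin> U"
    using gmult_support a unfolding grass_iff by blast
  ultimately show ?thesis unfolding grass_iff by blast
qed

lemma gmult_add_left: "gmult (x + y) z = gmult x z + gmult y z"
  unfolding gmult_def by (auto simp: fun_eq_iff algebra_simps sum.distrib)
lemma gmult_add_right: "gmult x (y + z) = gmult x y + gmult x z"
  unfolding gmult_def by (auto simp: fun_eq_iff algebra_simps sum.distrib)
lemma gmult_smult_left: "gmult (gsmult c x) z = gsmult c (gmult x z)"
  unfolding gmult_def gsmult_def by (auto simp: fun_eq_iff algebra_simps sum_distrib_left)
lemma gmult_smult_right: "gmult x (gsmult c z) = gsmult c (gmult x z)"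
  unfolding gmult_def gsmult_def by (auto simp: fun_eq_iff algebra_simps sum_distrib_left)
lemma gmult_zero_left: "gmult 0 z = 0"
  unfolding gmult_def by (auto simp: fun_eq_iff)
lemma gmult_zero_right: "gmult z 0 = 0"
  unfolding gmult_def by (auto simp: fun_eq_iff)
lemma gmult_sum_left: "gmult (sum f A) z = (\<Sum>i\<in>A. gmult (f i) z)"
proof (induction A rule: infinite_finite_induct)
  case (insert x F) then show ?case apply (subst sum.insert) apply assumption+
    apply (subst sum.insert) apply assumption+
    apply (subst gmult_add_left) by simp
next
  case (infinite A) then show ?case apply (subst sum.infinite, assumption)+ by (rule gmult_zero_left)
qed (simp_all only: sum.infinite sum.empty gmult_zero_left)
lemma gmult_sum_right: "gmult z (sum f A) = (\<Sum>i\<in>A. gmult z (f i))"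
proof (induction A rule: infinite_finite_induct)
  case (insert x F) then show ?case apply (subst sum.insert) apply assumption+
    apply (subst sum.insert) apply assumption+
    apply (subst gmult_add_right) by simp
next
  case (infinite A) then show ?case apply (subst sum.infinite, assumption)+ by (rule gmult_zero_right)
qed (simp_all only: sum.infinite sum.empty gmult_zero_right)

lemma gmono_mult: "finite S \<Longrightarrow> finite T \<Longrightarrow>
  gmult (gmono S) (gmono T) = (if S \<inter> T = {} then gsmult (gsign S T) (gmono (S \<union> T)) else 0)"
proof (rule ext)
  fix U assume fin: "finite S" "finite T"
  show "gmult (gmono S) (gmono T) U = (if S \<inter> T = {} then gsmult (gsign S T) (gmono (S \<union> T)) else 0) U"
  proof (cases "finite U \<and> S \<subseteq> U \<and> U - S = T")
    case True
    then have "gmult (gmono S) (gmono T) U = (\<Sum>R\<in>Pow U. gsign R (U-R) * gmono S R * gmono T (U - R))"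
      by (simp add: gmult_def)
    also have "\<dots> = (\<Sum>R\<in>Pow U. if R = S then gsign S T else 0)"
      by (rule sum.cong) (use True in \<open>auto simp: gmono_def\<close>)
    also have "\<dots> = gsign S T" using True by simp
    finally show ?thesis using True by (auto simp: gsmult_def gmono_def)
  next
    case False
    then have "gmult (gmono S) (gmono T) U = 0"
      using False unfolding gmult_def gmono_def by (auto intro!: sum.neutral split: if_splits)
    then show ?thesis using False fin by (auto simp: gsmult_def gmono_def)
  qed
qed

lemma grass_decomp: "x \<in> grass \<Longrightarrow> x = (\<Sum>S\<in>{S. x S \<noteq> 0}. gsmult (x S) (gmono S))"
proof (rule ext)
  fix U assume "x \<in> grass"
  then have f: "finite {S. x S \<noteq> 0}" unfolding grass_iff by auto
  have "(\<Sum>S\<in>{S. x S \<noteq> 0}. gsmult (x S) (gmono S)) U = (\<Sum>S\<in>{S. x S \<noteq> 0}. if S = U then x U else 0)"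
    unfolding sum_fun_apply gsmult_def gmono_def by (auto intro!: sum.cong)
  also have "\<dots> = x U" using f by (simp add: sum.delta')
  finally show "x U = (\<Sum>S\<in>{S. x S \<noteq> 0}. gsmult (x S) (gmono S)) U" by simp
qed

lemma gsign_lt: "(\<And>i j. i \<in> S \<Longrightarrow> j \<in> T \<Longrightarrow> i < j) \<Longrightarrow> gsign S T = 1"
proof -
  assume "\<And>i j. i \<in> S \<Longrightarrow> j \<in> T \<Longrightarrow> i < j"
  then have e: "{(i,j). i \<in> S \<and> j \<in> T \<and> j < i} = {}" by fastforce
  show ?thesis unfolding gsign_def e by simp
qed

lemma gsign_gt: "finite S \<Longrightarrow> finite T \<Longrightarrow> (\<And>i j. i \<in> S \<Longrightarrow> j \<in> T \<Longrightarrow> j < i) \<Longrightarrow>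
  gsign S T = (-1) ^ (card S * card T)"
proof -
  assume "finite S" "finite T" "\<And>i j. i \<in> S \<Longrightarrow> j \<in> T \<Longrightarrow> j < i"
  then have e: "{(i,j). i \<in> S \<and> j \<in> T \<and> j < i} = S \<times> T" by fastforce
  show ?thesis unfolding gsign_def e by (simp add: card_cartesian_product)
qed

lemma gsign_union_right: "finite S \<Longrightarrow> finite A \<Longrightarrow> finite B \<Longrightarrow> A \<inter> B = {} \<Longrightarrow>
  gsign S (A \<union> B) = gsign S A * gsign S B"
proof -
  assume f: "finite S" "finite A" "finite B" "A \<inter> B = {}"
  let ?X = "\<lambda>C. {(i,j). i \<in> S \<and> j \<in> C \<and> j < i}"
  have e: "?X (A \<union> B) = ?X A \<union> ?X B" by auto
  have d: "?X A \<inter> ?X B = {}" using f by auto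
  have fa: "finite (?X C)" if "finite C" for C
    by (rule finite_subset[of _ "S \<times> C"]) (use f that in auto)
  have "card (?X (A \<union> B)) = card (?X A) + card (?X B)"
    unfolding e using d fa f by (intro card_Un_disjoint) auto
  then show ?thesis unfolding gsign_def by (simp add: power_add)
qed

lemma gsign_union_left: "finite S \<Longrightarrow> finite A \<Longrightarrow> finite B \<Longrightarrow> A \<inter> B = {} \<Longrightarrow>
  gsign (A \<union> B) S = gsign A S * gsign B S"
proof -
  assume f: "finite S" "finite A" "finite B" "A \<inter> B = {}"
  let ?X = "\<lambda>C. {(i,j). i \<in> C \<and> j \<in> S \<and> j < i}"
  have e: "?X (A \<union> B) = ?X A \<union> ?X B" by auto
  have d: "?X A \<inter> ?X B = {}" using f by auto
  have fa: "finite (?X C)" if "finite C" for C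
    by (rule finite_subset[of _ "C \<times> S"]) (use f that in auto)
  have "card (?X (A \<union> B)) = card (?X A) + card (?X B)"
    unfolding e using d fa f by (intro card_Un_disjoint) auto
  then show ?thesis unfolding gsign_def by (simp add: power_add)
qed

lemma gsmult_one: "gsmult 1 x = x" by (simp add: gsmult_def)

lemma gprod_sorted: "sorted_wrt (<) xs \<Longrightarrow> (gprod xs :: nat set \<Rightarrow> 'a::field) = gmono (set xs)"
proof (induction xs)
  case Nil then show ?case by (simp add: gprod_def gone_gmono)
next
  case (Cons x xs)
  have "(gprod (x # xs) :: nat set \<Rightarrow> 'a) = gmult (gen x) (gprod xs)" by (simp add: gprod_def)
  also have "\<dots> = gmult (gmono {x}) (gmono (set xs))"
  proof -
    have "gprod xs = (gmono (set xs) :: nat set \<Rightarrow> 'a)" using Cons by simp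
    then show ?thesis by (simp add: gen_gmono)
  qed
  also have "\<dots> = gmono (set (x # xs))"
  proof -
    have "gsign {x} (set xs) = (1::'a)" using Cons(2) by (intro gsign_lt) auto
    then show ?thesis using Cons(2) by (subst gmono_mult) (auto simp: gsmult_one)
  qed
  finally show ?case .
qed

lemma gen_grass: "n \<ge> 1 \<Longrightarrow> gen n \<in> grass"
  by (simp add: gen_gmono gmono_grass)

lemma gone_grass: "gone \<in> grass" by (simp add: gone_gmono gmono_grass)

lemma gprod_grass: "\<forall>i\<in>set xs. i \<ge> 1 \<Longrightarrow> gprod xs \<in> grass"
  by (induction xs) (auto simp: gprod_def gone_grass gen_grass grass_gmult)

lemma endo_gprod: "grass_endo f \<Longrightarrow> \<forall>i\<in>set xs. i \<ge> 1 \<Longrightarrow>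
   f (gprod xs) = foldr gmult (map (f \<circ> gen) xs) gone"
proof (induction xs)
  case Nil then show ?case by (simp add: gprod_def grass_endo_def)
next
  case (Cons x xs)
  have "f (gprod (x # xs)) = f (gmult (gen x) (gprod xs))" by (simp add: gprod_def)
  also have "\<dots> = gmult (f (gen x)) (f (gprod xs))"
  proof -
    have "gen x \<in> grass" "gprod xs \<in> grass" using Cons(3) gen_grass gprod_grass by auto
    then show ?thesis using Cons(2) unfolding grass_endo_def by blast
  qed
  finally show ?case using Cons by simp
qed

lemma endo_zero: "grass_endo f \<Longrightarrow> f 0 = 0"
proof -
  assume a: "grass_endo f"
  have "0 = gsmult 0 gone" by (simp add: gsmult_def fun_eq_iff)
  then have "f 0 = gsmult 0 (f gone)" using a gone_grass unfolding grass_endo_def by metis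
  then show ?thesis by (simp add: gsmult_def fun_eq_iff)
qed

lemma endo_sum: "grass_endo f \<Longrightarrow> (\<And>i. i \<in> A \<Longrightarrow> h i \<in> grass) \<Longrightarrow> f (sum h A) = (\<Sum>i\<in>A. f (h i))"
proof (induction A rule: infinite_finite_induct)
  case (infinite A)
  then have "sum h A = 0" "(\<Sum>i\<in>A. f (h i)) = 0" by auto
  then show ?case using endo_zero[OF infinite(2)] by metis
next
  case empty
  have "sum h {} = 0" "(\<Sum>i\<in>{}. f (h i)) = 0" by auto
  then show ?case using endo_zero[OF empty(1)] by metis
next
  case (insert x F)
  have "f (sum h (insert x F)) = f (gadd (h x) (sum h F))" using insert by (simp add: gadd_plus)
  also have "\<dots> = gadd (f (h x)) (f (sum h F))"
  proof -
    have "h x \<in> grass" "sum h F \<in> grass" using insert(5) by (auto intro: grass_sum)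
    then show ?thesis using insert(4) unfolding grass_endo_def by blast
  qed
  moreover have "f (sum h F) = (\<Sum>i\<in>F. f (h i))" using insert by auto
  ultimately show ?case using insert(1,2) by (metis gadd_plus sum.insert)
qed

lemma endo_mono: "grass_endo f \<Longrightarrow> finite S \<Longrightarrow> 0 \<notin> S \<Longrightarrow>
   f (gmono S) = foldr gmult (map (f \<circ> gen) (sorted_list_of_set S)) gone"
proof -
  assume a: "grass_endo f" "finite S" "0 \<notin> S"
  have "gmono S = gprod (sorted_list_of_set S)" using a by (simp add: gprod_sorted)
  moreover have "\<forall>i\<in>set (sorted_list_of_set S). i \<ge> 1" using a by (auto simp: Suc_le_eq intro!: gr0I)
  ultimately show ?thesis using endo_gprod a by metis
qed

lemma endo_unique:
  assumes f: "grass_endo f" and g: "grass_endo g" and fg: "\<And>n. n \<ge> 1 \<Longrightarrow> f (gen n) = g (gen n)"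
    and x: "x \<in> grass"
  shows "f x = g x"
proof -
  let ?A = "{S. x S \<noteq> 0}"
  have m: "f (gmono S) = g (gmono S)" if "S \<in> ?A" for S
  proof -
    have S: "finite S" "0 \<notin> S" using that x unfolding grass_iff by auto
    have e: "map (f \<circ> gen) (sorted_list_of_set S) = map (g \<circ> gen) (sorted_list_of_set S)"
      using S by (intro map_cong refl) (auto simp: Suc_le_eq intro!: gr0I fg)
    show ?thesis unfolding endo_mono[OF f S] endo_mono[OF g S] e ..
  qed
  have mg: "gsmult (x S) (gmono S) \<in> grass" if "S \<in> ?A" for S
    using that x by (intro grass_smult gmono_grass) (auto simp: grass_iff)
  have "f x = (\<Sum>S\<in>?A. f (gsmult (x S) (gmono S)))"
    by (subst grass_decomp[OF x]) (rule endo_sum[OF f mg])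
  also have "\<dots> = (\<Sum>S\<in>?A. g (gsmult (x S) (gmono S)))"
  proof (rule sum.cong)
    fix S assume "S \<in> ?A"
    then have "finite S" "0 \<notin> S" using x unfolding grass_iff by auto
    then show "f (gsmult (x S) (gmono S)) = g (gsmult (x S) (gmono S))"
      using f g m[OF \<open>S \<in> ?A\<close>] gmono_grass unfolding grass_endo_def by metis
  qed simp
  also have "\<dots> = g x"
    by (subst (2) grass_decomp[OF x]) (rule endo_sum[OF g mg, symmetric])
  finally show ?thesis .
qed

definition cnt :: "nat \<Rightarrow> nat set \<Rightarrow> nat" where "cnt k U = card {i\<in>U. k < i}"

definition Lmap :: "nat \<Rightarrow> nat \<Rightarrow> 'a::field \<Rightarrow> (nat \<Rightarrow> 'a) \<Rightarrow> (nat set \<Rightarrow> 'a) \<Rightarrow> (nat set \<Rightarrow> 'a)" where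
  "Lmap k t s \<beta> x = (\<lambda>U. s ^ cnt k U * x U +
      (if {1..k+t} \<subseteq> U then \<beta> (cnt k (U - {1..k+t})) * x (U - {1..k+t}) else 0))"

lemma L_add: "Lmap k t s \<beta> (x + y) = Lmap k t s \<beta> x + Lmap k t s \<beta> y"
  unfolding Lmap_def by (auto simp: fun_eq_iff algebra_simps)

lemma L_smult: "Lmap k t s \<beta> (gsmult c x) = gsmult c (Lmap k t s \<beta> x)"
  unfolding Lmap_def gsmult_def by (auto simp: fun_eq_iff algebra_simps)

lemma L_zero: "Lmap k t s \<beta> 0 = 0"
  unfolding Lmap_def by (auto simp: fun_eq_iff)

lemma L_sum: "Lmap k t s \<beta> (sum f A) = (\<Sum>i\<in>A. Lmap k t s \<beta> (f i))"
proof (induction A rule: infinite_finite_induct)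
  case (insert x F) then show ?case apply (subst sum.insert) apply assumption+
    apply (subst sum.insert) apply assumption+
    apply (subst L_add) by simp
next
  case (infinite A) then show ?case apply (subst sum.infinite, assumption)+ by (rule L_zero)
qed (simp_all only: sum.empty L_zero)

lemma L_grass: "x \<in> grass \<Longrightarrow> Lmap k t s \<beta> x \<in> grass"
proof -
  assume x: "x \<in> grass"
  let ?P = "{1..k+t}"
  let ?A = "{S. x S \<noteq> 0}"
  have sub: "{U. Lmap k t s \<beta> x U \<noteq> 0} \<subseteq> ?A \<union> (\<lambda>V. ?P \<union> V) ` ?A"
  proof
    fix U assume "U \<in> {U. Lmap k t s \<beta> x U \<noteq> 0}"
    then have "x U \<noteq> 0 \<or> (?P \<subseteq> U \<and> x (U - ?P) \<noteq> 0)" unfolding Lmap_def by (auto split: if_splits)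
    then show "U \<in> ?A \<union> (\<lambda>V. ?P \<union> V) ` ?A"
    proof
      assume "?P \<subseteq> U \<and> x (U - ?P) \<noteq> 0"
      then have "U = ?P \<union> (U - ?P)" "U - ?P \<in> ?A" by auto
      then show ?thesis by blast
    qed auto
  qed
  have "finite {U. Lmap k t s \<beta> x U \<noteq> 0}"
    by (rule finite_subset[OF sub]) (use x in \<open>auto simp: grass_iff\<close>)
  moreover have "finite U \<and> 0 \<notin> U" if "Lmap k t s \<beta> x U \<noteq> 0" for U
  proof -
    from that sub have "U \<in> ?A \<union> (\<lambda>V. ?P \<union> V) ` ?A" by blast
    then show ?thesis using x unfolding grass_iff by auto
  qed
  ultimately show ?thesis unfolding grass_iff by blast
qed

lemma L_gmono: "t \<ge> 1 \<Longrightarrow> Lmap k t s \<beta> (gmono S) = gsmult (s ^ cnt k S) (gmono S) +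
   (if S \<inter> {1..k+t} = {} then gsmult (\<beta> (cnt k S)) (gmono ({1..k+t} \<union> S)) else 0)"
proof (rule ext)
  fix U assume t: "t \<ge> 1"
  let ?P = "{1..k+t}"
  have ne: "1 \<in> ?P" using t by auto
  have e: "(?P \<subseteq> U \<and> U - ?P = S) \<longleftrightarrow> (S \<inter> ?P = {} \<and> U = ?P \<union> S)" by auto
  have a: "(if ?P \<subseteq> U then \<beta> (cnt k (U - ?P)) * gmono S (U - ?P) else 0)
      = (if S \<inter> ?P = {} \<and> U = ?P \<union> S then \<beta> (cnt k S) else 0)"
    using e by (auto simp: gmono_def)
  have b: "(if S \<inter> ?P = {} then gsmult (\<beta> (cnt k S)) (gmono (?P \<union> S)) else 0) U
      = (if S \<inter> ?P = {} \<and> U = ?P \<union> S then \<beta> (cnt k S) else 0)"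
    by (auto simp: gsmult_def gmono_def)
  have c: "U = S \<Longrightarrow> \<not> (S \<inter> ?P = {} \<and> U = ?P \<union> S)" using ne by blast
  have d: "s ^ cnt k U * gmono S U = gsmult (s ^ cnt k S) (gmono S) U"
    by (simp add: gsmult_def gmono_def)
  show "Lmap k t s \<beta> (gmono S) U = (gsmult (s ^ cnt k S) (gmono S) +
   (if S \<inter> ?P = {} then gsmult (\<beta> (cnt k S)) (gmono (?P \<union> S)) else 0)) U"
    unfolding plus_fun_apply b using a d by (simp add: Lmap_def)
qed

lemma L_one: "t \<ge> 1 \<Longrightarrow> \<beta> 0 = 0 \<Longrightarrow> Lmap k t s \<beta> gone = gone"
  unfolding gone_gmono by (simp add: L_gmono cnt_def gsmult_def fun_eq_iff)

lemma gsmult_zero: "gsmult c 0 = 0" by (simp add: gsmult_def fun_eq_iff)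
lemma gsmult_gsmult: "gsmult c (gsmult d x) = gsmult (c * d) x" by (simp add: gsmult_def fun_eq_iff)

lemma cnt_union: "finite A \<Longrightarrow> finite B \<Longrightarrow> A \<inter> B = {} \<Longrightarrow> cnt k (A \<union> B) = cnt k A + cnt k B"
proof -
  assume a: "finite A" "finite B" "A \<inter> B = {}"
  have "{i \<in> A \<union> B. k < i} = {i \<in> A. k < i} \<union> {i \<in> B. k < i}" by auto
  then show ?thesis unfolding cnt_def using a by (simp add: card_Un_disjoint disjoint_iff)
qed

lemma cnt_P: "cnt k {1..k+t} = t"
proof -
  have "{i \<in> {1..k+t}. k < i} = {k+1..k+t}" by auto
  then show ?thesis unfolding cnt_def by simp
qed

lemma cnt_gt: "(\<And>i. i \<in> S \<Longrightarrow> k < i) \<Longrightarrow> cnt k S = card S"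
  unfolding cnt_def by (metis (no_types, lifting) Collect_cong Collect_mem_eq)

lemma L_mult_gmono:
  fixes s :: "'a::field"
  assumes t: "t \<ge> 1" and S: "finite S" "0 \<notin> S" and T: "finite T" "0 \<notin> T"
    and hb: "\<And>m n. \<beta> (m + n) = (s * (-1) ^ (k+t)) ^ m * \<beta> n + s ^ n * \<beta> m"
  shows "Lmap k t s \<beta> (gmult (gmono S) (gmono T)) = gmult (Lmap k t s \<beta> (gmono S)) (Lmap k t s \<beta> (gmono T))"
proof -
  let ?P = "{1..k+t}"
  have ne: "1 \<in> ?P" using t by auto
  have fP: "finite ?P" by simp
  note simps = L_gmono[OF t] gmult_add_left gmult_add_right gmult_smult_left gmult_smult_right
     gmult_zero_left gmult_zero_right gmono_mult S(1) T(1) fP gsmult_zero gsmult_gsmult L_smult L_zero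
  show ?thesis
  proof (cases "S \<inter> T = {}")
    case False
    then have "S \<inter> (?P \<union> T) \<noteq> {}" "(?P \<union> S) \<inter> T \<noteq> {}" "(?P \<union> S) \<inter> (?P \<union> T) \<noteq> {}" by auto
    then show ?thesis using False by (simp add: simps mult_ac)
  next
    case True
    show ?thesis
    proof (cases "S \<inter> ?P = {} \<and> T \<inter> ?P = {}")
      case False
      have sp: "s ^ cnt k (S \<union> T) = s ^ cnt k S * s ^ cnt k T"
        using S T True by (simp add: cnt_union power_add)
      have u: "(S \<union> T) \<inter> ?P \<noteq> {}" "(?P \<union> S) \<inter> (?P \<union> T) \<noteq> {}" using False ne by auto
      show ?thesis
      proof (cases "S \<inter> ?P = {}")
        case False
        then have "S \<inter> (?P \<union> T) \<noteq> {}" by auto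
        then show ?thesis using True False u sp by (simp add: simps mult_ac)
      next
        case SP: True
        then have TP: "T \<inter> ?P \<noteq> {}" using False by auto
        then have "(?P \<union> S) \<inter> T \<noteq> {}" by auto
        then show ?thesis using True SP TP u sp by (simp add: simps mult_ac)
      qed
    next
      case False2: True
      then have gt: "\<And>i. i \<in> S \<Longrightarrow> k + t < i" "\<And>i. i \<in> T \<Longrightarrow> k + t < i"
        using S T by (metis IntI atLeastAtMost_iff empty_iff less_one not_le_imp_less)+
      have cS: "cnt k S = card S" by (rule cnt_gt) (use gt(1) in fastforce)
      have cT: "cnt k T = card T" by (rule cnt_gt) (use gt(2) in fastforce)
      have cST: "cnt k (S \<union> T) = card S + card T" using S T True cS cT by (simp add: cnt_union)
      have cP: "card ?P = k + t" by simp
      have g1: "gsign S (?P \<union> T) = ((-1) ^ (k+t)) ^ card S * (gsign S T :: 'a)"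
      proof -
        have "gsign S (?P \<union> T) = gsign S ?P * gsign S T"
          using S T False2 by (intro gsign_union_right) auto
        also have "gsign S ?P = (-1) ^ (card S * card ?P)"
          using S gt(1) by (intro gsign_gt) (auto, fastforce)
        finally show ?thesis unfolding cP by (metis mult.commute power_mult)
      qed
      have g2: "gsign (?P \<union> S) T = (gsign S T :: 'a)"
      proof -
        have "gsign (?P \<union> S) T = gsign ?P T * gsign S T"
          using S T False2 by (intro gsign_union_left) auto
        also have "gsign ?P T = 1"
          using gt(2) by (intro gsign_lt) fastforce
        finally show ?thesis by simp
      qed
      have d: "S \<inter> (?P \<union> T) = {}" "(?P \<union> S) \<inter> T = {}" "(?P \<union> S) \<inter> (?P \<union> T) \<noteq> {}"
        "(S \<union> T) \<inter> ?P = {}" using False2 True ne by auto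
      have e: "S \<union> (?P \<union> T) = ?P \<union> (S \<union> T)" "(?P \<union> S) \<union> T = ?P \<union> (S \<union> T)" by auto
      have b: "\<beta> (card S + card T) = (s * (-1) ^ (k+t)) ^ card S * \<beta> (card T) + s ^ card T * \<beta> (card S)"
        by (rule hb)
      show ?thesis using True False2 d e g1 g2 b
        apply (simp add: simps cS cT cST)
        apply (rule ext)
        apply (simp only: plus_fun_apply gsmult_def g1 g2 b)
        apply (simp add: algebra_simps power_add power_mult_distrib)
        done
    qed
  qed
qed

lemma gsmult_sum: "gsmult c (sum f A) = (\<Sum>i\<in>A. gsmult c (f i))"
  by (simp add: gsmult_def fun_eq_iff sum_fun_apply sum_distrib_left)

lemma gmult_expand: "gmult (\<Sum>i\<in>A. gsmult (a i) (f i)) (\<Sum>j\<in>B. gsmult (b j) (g j)) =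
   (\<Sum>i\<in>A. \<Sum>j\<in>B. gsmult (a i * b j) (gmult (f i) (g j)))"
  unfolding gmult_sum_left gmult_smult_left gmult_sum_right gmult_smult_right gsmult_sum gsmult_gsmult
  by (subst sum.swap) (simp add: mult.commute)

lemma L_decomp: "x \<in> grass \<Longrightarrow> Lmap k t s \<beta> x = (\<Sum>S\<in>{S. x S \<noteq> 0}. gsmult (x S) (Lmap k t s \<beta> (gmono S)))"
  by (subst grass_decomp, assumption) (simp add: L_sum L_smult)

lemma L_mult:
  fixes s :: "'a::field"
  assumes t: "t \<ge> 1"
    and hb: "\<And>m n. \<beta> (m + n) = (s * (-1) ^ (k+t)) ^ m * \<beta> n + s ^ n * \<beta> m"
    and x: "x \<in> grass" and y: "y \<in> grass"
  shows "Lmap k t s \<beta> (gmult x y) = gmult (Lmap k t s \<beta> x) (Lmap k t s \<beta> y)"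
proof -
  let ?A = "{S. x S \<noteq> 0}" and ?B = "{S. y S \<noteq> 0}"
  let ?L = "Lmap k t s \<beta>"
  have "gmult x y = gmult (\<Sum>S\<in>?A. gsmult (x S) (gmono S)) (\<Sum>T\<in>?B. gsmult (y T) (gmono T))"
    using grass_decomp[OF x] grass_decomp[OF y] by simp
  also have "\<dots> = (\<Sum>S\<in>?A. \<Sum>T\<in>?B. gsmult (x S * y T) (gmult (gmono S) (gmono T)))"
    by (rule gmult_expand)
  finally have "?L (gmult x y) = (\<Sum>S\<in>?A. \<Sum>T\<in>?B. gsmult (x S * y T) (?L (gmult (gmono S) (gmono T))))"
    by (simp add: L_sum L_smult)
  also have "\<dots> = (\<Sum>S\<in>?A. \<Sum>T\<in>?B. gsmult (x S * y T) (gmult (?L (gmono S)) (?L (gmono T))))"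
  proof (intro sum.cong refl)
    fix S T assume "S \<in> ?A" "T \<in> ?B"
    then have "finite S" "0 \<notin> S" "finite T" "0 \<notin> T" using x y unfolding grass_iff by auto
    then show "gsmult (x S * y T) (?L (gmult (gmono S) (gmono T))) = gsmult (x S * y T) (gmult (?L (gmono S)) (?L (gmono T)))"
      using L_mult_gmono[OF t _ _ _ _ hb] by metis
  qed
  also have "\<dots> = gmult (\<Sum>S\<in>?A. gsmult (x S) (?L (gmono S))) (\<Sum>T\<in>?B. gsmult (y T) (?L (gmono T)))"
    by (rule gmult_expand[symmetric])
  also have "\<dots> = gmult (?L x) (?L y)" using L_decomp[OF x] L_decomp[OF y] by simp
  finally show ?thesis .
qed

lemma L_endo:
  fixes s :: "'a::field"
  assumes t: "t \<ge> 1" and b0: "\<beta> 0 = 0"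
    and hb: "\<And>m n. \<beta> (m + n) = (s * (-1) ^ (k+t)) ^ m * \<beta> n + s ^ n * \<beta> m"
  shows "grass_endo (Lmap k t s \<beta>)"
  unfolding grass_endo_def gadd_plus
  by (intro conjI ballI allI L_grass L_add L_smult L_mult[OF t hb] L_one[of t \<beta> k s, OF t b0])

lemma conj_image:
  assumes pg: "\<And>x. x \<in> grass \<Longrightarrow> psi x \<in> grass"
    and qg: "\<And>x. x \<in> grass \<Longrightarrow> psi' x \<in> grass"
    and pq: "\<And>x. x \<in> grass \<Longrightarrow> psi (psi' x) = x"
    and qp: "\<And>x. x \<in> grass \<Longrightarrow> psi' (psi x) = x"
    and fg: "\<And>x. x \<in> grass \<Longrightarrow> f x \<in> grass"
    and hg: "\<And>x. x \<in> grass \<Longrightarrow> h x \<in> grass"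
    and comm: "\<And>x. x \<in> grass \<Longrightarrow> psi (f x) = g (psi x)"
    and ph: "\<And>x. x \<in> grass \<Longrightarrow> psi (h x) = h (psi x)"
  shows "psi ` {x \<in> grass. f x = h x} = {y \<in> grass. g y = h y}"
proof
  show "psi ` {x \<in> grass. f x = h x} \<subseteq> {y \<in> grass. g y = h y}"
  proof
    fix y assume "y \<in> psi ` {x \<in> grass. f x = h x}"
    then obtain x where x: "x \<in> grass" "f x = h x" "y = psi x" by blast
    then have "g y = h y" using comm ph by metis
    then show "y \<in> {y \<in> grass. g y = h y}" using x pg by blast
  qed
next
  show "{y \<in> grass. g y = h y} \<subseteq> psi ` {x \<in> grass. f x = h x}"
  proof
    fix y assume y: "y \<in> {y \<in> grass. g y = h y}"
    define x where "x = psi' y"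
    have xg: "x \<in> grass" using y qg x_def by blast
    have yx: "y = psi x" using y pq x_def by auto
    have "psi (f x) = psi (h x)" using comm[OF xg] ph[OF xg] y yx by simp
    then have "psi' (psi (f x)) = psi' (psi (h x))" by simp
    then have "f x = h x" using qp fg hg xg by metis
    then show "y \<in> psi ` {x \<in> grass. f x = h x}" using xg yx by blast
  qed
qed

lemma neg_self_zero: "(- a = (a::'a::field_char_0)) \<longleftrightarrow> a = 0"
proof
  assume h: "- a = a"
  have "a + a = - a + a" by (simp only: h)
  also have "\<dots> = 0" by (rule add.left_inverse)
  finally have "2 * a = 0" by (simp only: mult_2)
  then show "a = 0" by simp
qed simp

lemma neg_self_zero2: "(a = - (a::'a::field_char_0)) \<longleftrightarrow> a = 0"
  by (subst eq_commute) (rule neg_self_zero)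

lemma pow_eq_self: "((-1) ^ n * a = (a::'a::field_char_0)) \<longleftrightarrow> (even n \<or> a = 0)"
  by (cases "even n") (simp_all add: neg_self_zero)

lemma pow_eq_neg: "((-1) ^ n * a = - (a::'a::field_char_0)) \<longleftrightarrow> (odd n \<or> a = 0)"
  by (cases "even n") (simp_all add: neg_self_zero2)

lemma sigma_Ek0:
  "Ek0 k = {x \<in> grass. Lmap k t (-1) (\<lambda>_. 0) x = (x :: nat set \<Rightarrow> 'a::field_char_0)}"
proof -
  have "Lmap k t (-1) (\<lambda>_. 0) x = x \<longleftrightarrow> (\<forall>S. x S \<noteq> 0 \<longrightarrow> even (card {i \<in> S. k < i}))"
    for x :: "nat set \<Rightarrow> 'a"
  proof -
    have "Lmap k t (-1) (\<lambda>_. 0) x = x \<longleftrightarrow> (\<forall>U. (-1) ^ cnt k U * x U = x U)"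
      unfolding Lmap_def by (simp add: fun_eq_iff)
    also have "\<dots> \<longleftrightarrow> (\<forall>S. x S \<noteq> 0 \<longrightarrow> even (card {i \<in> S. k < i}))"
      unfolding cnt_def pow_eq_self by auto
    finally show ?thesis .
  qed
  then show ?thesis unfolding Ek0_def by auto
qed

lemma sigma_Ek1:
  "Ek1 k = {x \<in> grass. Lmap k t (-1) (\<lambda>_. 0) x = gneg (x :: nat set \<Rightarrow> 'a::field_char_0)}"
proof -
  have "Lmap k t (-1) (\<lambda>_. 0) x = gneg x \<longleftrightarrow> (\<forall>S. x S \<noteq> 0 \<longrightarrow> odd (card {i \<in> S. k < i}))"
    for x :: "nat set \<Rightarrow> 'a"
  proof -
    have "Lmap k t (-1) (\<lambda>_. 0) x = gneg x \<longleftrightarrow> (\<forall>U. (-1) ^ cnt k U * x U = - x U)"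
      unfolding Lmap_def gneg_def by (simp add: fun_eq_iff)
    also have "\<dots> \<longleftrightarrow> (\<forall>S. x S \<noteq> 0 \<longrightarrow> odd (card {i \<in> S. k < i}))"
      unfolding cnt_def pow_eq_neg by auto
    finally show ?thesis .
  qed
  then show ?thesis unfolding Ek1_def by auto
qed

definition bpsi :: "nat \<Rightarrow> nat \<Rightarrow> nat \<Rightarrow> 'a::field" where
  "bpsi k t m = (\<Sum>i<m. ((-1) ^ (k+t)) ^ i)"

definition bphi :: "nat \<Rightarrow> nat \<Rightarrow> nat \<Rightarrow> 'a::field" where
  "bphi k t m = - 2 * (-1) ^ m * bpsi k t m"

lemma bpsi_rec: "(bpsi k t (m + n) :: 'a::field) = (1 * (-1) ^ (k+t)) ^ m * bpsi k t n + 1 ^ n * bpsi k t m"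
proof (induction n)
  case 0 then show ?case by (simp add: bpsi_def)
next
  case (Suc n)
  have "(bpsi k t (m + Suc n) :: 'a) = bpsi k t (m + n) + ((-1) ^ (k+t)) ^ (m + n)"
    by (simp add: bpsi_def)
  also have "\<dots> = ((-1) ^ (k+t)) ^ m * (bpsi k t n + ((-1) ^ (k+t)) ^ n) + bpsi k t m"
    using Suc by (simp add: power_add algebra_simps)
  also have "bpsi k t n + ((-1) ^ (k+t)) ^ n = (bpsi k t (Suc n) :: 'a)"
    by (simp add: bpsi_def)
  finally show ?case by simp
qed

lemma bphi_rec: "(bphi k t (m + n) :: 'a::field) = (- 1 * (-1) ^ (k+t)) ^ m * bphi k t n + (-1) ^ n * bphi k t m"
proof -
  define r :: 'a where "r = (-1) ^ (k+t)"
  have h: "(bpsi k t (m + n) :: 'a) = r ^ m * bpsi k t n + bpsi k t m"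
    using bpsi_rec[where 'a='a, of k t m n] unfolding r_def by simp
  have p: "(- 1 * r) ^ m = (-1) ^ m * r ^ m" by (rule power_mult_distrib)
  show ?thesis unfolding r_def[symmetric] p unfolding bphi_def h power_add
    by (simp add: algebra_simps)
qed

lemma bneg_rec: "(- bpsi k t (m + n) :: 'a::field) = (1 * (-1) ^ (k+t)) ^ m * (- bpsi k t n) + 1 ^ n * (- bpsi k t m)"
  using bpsi_rec[where 'a='a, of k t m n] by (simp add: algebra_simps)

lemma Lmap_comm:
  fixes x :: "nat set \<Rightarrow> 'a::field"
  assumes t: "t \<ge> 1" "odd t" and x: "x \<in> grass"
  shows "Lmap k t 1 (bpsi k t) (Lmap k t (-1) (bphi k t) x) = Lmap k t (-1) (\<lambda>_. 0) (Lmap k t 1 (bpsi k t) x)"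
proof (rule ext)
  fix U
  let ?P = "{1..k+t}"
  have ne: "1 \<in> ?P" using t by auto
  show "Lmap k t 1 (bpsi k t) (Lmap k t (-1) (bphi k t) x) U = Lmap k t (-1) (\<lambda>_. 0) (Lmap k t 1 (bpsi k t) x) U"
  proof (cases "?P \<subseteq> U")
    case False then show ?thesis by (simp add: Lmap_def)
  next
    case True
    define V where "V = U - ?P"
    have nV: "\<not> ?P \<subseteq> V" using ne V_def by auto
    show ?thesis
    proof (cases "finite U")
      case False
      then have "x U = 0" "x V = 0" using x unfolding grass_iff V_def by auto
      then show ?thesis using True nV by (simp add: Lmap_def V_def)
    next
      case fin: True
      have UV: "U = ?P \<union> V" "?P \<inter> V = {}" using True V_def by auto
      have cU: "cnt k U = t + cnt k V"
        using fin UV cnt_union[of ?P V k] cnt_P[of k t] by simp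
      have sg: "(-1::'a) ^ cnt k U = - ((-1) ^ cnt k V)" using cU t by (simp add: power_add)
      have l: "Lmap k t 1 (bpsi k t) (Lmap k t (-1) (bphi k t) x) U =
        (-1) ^ cnt k U * x U + bphi k t (cnt k V) * x V + bpsi k t (cnt k V) * ((-1) ^ cnt k V * x V)"
        using True nV unfolding Lmap_def V_def[symmetric] by simp
      have r: "Lmap k t (-1) (\<lambda>_. 0) (Lmap k t 1 (bpsi k t) x) U =
        (-1) ^ cnt k U * (x U + bpsi k t (cnt k V) * x V)"
        using True nV unfolding Lmap_def V_def[symmetric] by simp
      show ?thesis unfolding l r sg bphi_def by (simp add: algebra_simps)
    qed
  qed
qed

lemma Lmap_inv:
  fixes x :: "nat set \<Rightarrow> 'a::field"
  assumes t: "t \<ge> 1"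
  shows "Lmap k t 1 (\<lambda>m. - bpsi k t m) (Lmap k t 1 (bpsi k t) x) = x"
    and "Lmap k t 1 (bpsi k t) (Lmap k t 1 (\<lambda>m. - bpsi k t m) x) = x"
proof -
  let ?P = "{1..k+t}"
  have ne: "1 \<in> ?P" using t by auto
  have nV: "\<not> ?P \<subseteq> U - ?P" for U using ne by auto
  show "Lmap k t 1 (\<lambda>m. - bpsi k t m) (Lmap k t 1 (bpsi k t) x) = x"
    using nV by (simp add: Lmap_def fun_eq_iff)
  show "Lmap k t 1 (bpsi k t) (Lmap k t 1 (\<lambda>m. - bpsi k t m) x) = x"
    using nV by (simp add: Lmap_def fun_eq_iff)
qed

lemma Lmap_neg: "Lmap k t s \<beta> (gneg x) = gneg (Lmap k t s \<beta> x)"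
  by (simp add: Lmap_def gneg_def fun_eq_iff)

lemma gneg_grass: "x \<in> grass \<Longrightarrow> gneg x \<in> grass"
proof -
  assume "x \<in> grass"
  then have "gsmult (-1) x \<in> grass" by (rule grass_smult)
  moreover have "gsmult (-1) x = gneg x" by (simp add: gsmult_def gneg_def fun_eq_iff)
  ultimately show ?thesis by simp
qed

lemma cnt_single: "cnt k {n} = (if k < n then 1 else 0)"
proof -
  have "{i\<in>{n}. k < i} = (if k < n then {n} else {})" by auto
  then show ?thesis unfolding cnt_def by simp
qed

lemma phi0_gen1: "t \<ge> 1 \<Longrightarrow> 1 \<le> n \<Longrightarrow> n \<le> k \<Longrightarrow>
   Lmap k t (-1) (bphi k t) (gen n) = (gen n :: nat set \<Rightarrow> 'a::field)"
  unfolding gen_gmono by (simp add: L_gmono cnt_single gsmult_one)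

lemma phi0_gen2: "t \<ge> 1 \<Longrightarrow> k + 1 \<le> n \<Longrightarrow> n \<le> k + t \<Longrightarrow>
   Lmap k t (-1) (bphi k t) (gen n) = gneg (gen n :: nat set \<Rightarrow> 'a::field)"
  unfolding gen_gmono by (simp add: L_gmono cnt_single gsmult_def gneg_def fun_eq_iff)

lemma phi0_gen3:
  assumes t: "t \<ge> 1" and n: "k + t < n"
  shows "Lmap k t (-1) (bphi k t) (gen n) =
    gadd (gneg (gen n)) (gsmult 2 (gmult (gprod [1..<k+t+1]) (gen n :: nat set \<Rightarrow> 'a::field)))"
proof -
  let ?P = "{1..k+t}"
  have se: "set [1..<k+t+1] = ?P" by auto
  have so: "sorted_wrt (<) [1..<k+t+1]" by (rule sorted_wrt_upt)
  have gp: "(gprod [1..<k+t+1] :: nat set \<Rightarrow> 'a) = gmono ?P"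
    using gprod_sorted[where 'a='a, OF so] unfolding se .
  have gs: "gsign ?P {n} = (1::'a)" using n by (intro gsign_lt) auto
  have m: "gmult (gprod [1..<k+t+1]) (gen n) = (gmono (?P \<union> {n}) :: nat set \<Rightarrow> 'a)"
    unfolding gp gen_gmono using n gs by (simp add: gmono_mult gsmult_one)
  have b1: "bphi k t 1 = (2::'a)" by (simp add: bphi_def bpsi_def)
  have d: "{n} \<inter> ?P = {}" using n by auto
  show ?thesis unfolding m unfolding gen_gmono L_gmono[OF t] using n d b1
    by (simp add: cnt_single gsmult_def gneg_def gadd_def fun_eq_iff)
qed

theorem mainTheorem9:
  fixes k t :: nat
  assumes "t \<ge> 1" and "odd t"
  shows "(\<exists>phi :: (nat set \<Rightarrow> 'a::field_char_0) \<Rightarrow> (nat set \<Rightarrow> 'a).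
            grass_endo phi \<and>
            (\<forall>n. 1 \<le> n \<and> n \<le> k \<longrightarrow> phi (gen n) = gen n) \<and>
            (\<forall>n. k + 1 \<le> n \<and> n \<le> k + t \<longrightarrow> phi (gen n) = gneg (gen n)) \<and>
            (\<forall>n. k + t < n \<longrightarrow>
               phi (gen n) = gadd (gneg (gen n)) (gsmult 2 (gmult (gprod [1..<k+t+1]) (gen n)))))
       \<and> (\<forall>phi :: (nat set \<Rightarrow> 'a) \<Rightarrow> (nat set \<Rightarrow> 'a).
            grass_endo phi \<and>
            (\<forall>n. 1 \<le> n \<and> n \<le> k \<longrightarrow> phi (gen n) = gen n) \<and>
            (\<forall>n. k + 1 \<le> n \<and> n \<le> k + t \<longrightarrow> phi (gen n) = gneg (gen n)) \<and>
            (\<forall>n. k + t < n \<longrightarrow>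
               phi (gen n) = gadd (gneg (gen n)) (gsmult 2 (gmult (gprod [1..<k+t+1]) (gen n))))
            \<longrightarrow> (\<exists>psi. graded_iso (Ephi0 phi) (Ephi1 phi) (Ek0 k) (Ek1 k) psi))"
proof -
  have t1: "t \<ge> 1" and todd: "odd t" using assms by auto
  define phi0 :: "(nat set \<Rightarrow> 'a) \<Rightarrow> (nat set \<Rightarrow> 'a)" where "phi0 = Lmap k t (-1) (bphi k t)"
  define psi :: "(nat set \<Rightarrow> 'a) \<Rightarrow> (nat set \<Rightarrow> 'a)" where "psi = Lmap k t 1 (bpsi k t)"
  define psi' :: "(nat set \<Rightarrow> 'a) \<Rightarrow> (nat set \<Rightarrow> 'a)" where "psi' = Lmap k t 1 (\<lambda>m. - bpsi k t m)"
  define sig :: "(nat set \<Rightarrow> 'a) \<Rightarrow> (nat set \<Rightarrow> 'a)" where "sig = Lmap k t (-1) (\<lambda>_. 0)"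
  have endo0: "grass_endo phi0" unfolding phi0_def
    by (rule L_endo[OF t1]) (simp add: bphi_def bpsi_def, rule bphi_rec)
  have G1: "\<forall>n. 1 \<le> n \<and> n \<le> k \<longrightarrow> phi0 (gen n) = gen n"
    unfolding phi0_def using phi0_gen1[OF t1] by blast
  have G2: "\<forall>n. k + 1 \<le> n \<and> n \<le> k + t \<longrightarrow> phi0 (gen n) = gneg (gen n)"
    unfolding phi0_def using phi0_gen2[OF t1] by blast
  have G3: "\<forall>n. k + t < n \<longrightarrow>
               phi0 (gen n) = gadd (gneg (gen n)) (gsmult 2 (gmult (gprod [1..<k+t+1]) (gen n)))"
    unfolding phi0_def using phi0_gen3[OF t1] by blast
  have endo_psi: "grass_endo psi" unfolding psi_def
    by (rule L_endo[OF t1]) (simp add: bpsi_def, rule bpsi_rec)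
  have psi_g: "\<And>x. x \<in> grass \<Longrightarrow> psi x \<in> grass" unfolding psi_def by (rule L_grass)
  have psi'_g: "\<And>x. x \<in> grass \<Longrightarrow> psi' x \<in> grass" unfolding psi'_def by (rule L_grass)
  have phi0_g: "\<And>x. x \<in> grass \<Longrightarrow> phi0 x \<in> grass" unfolding phi0_def by (rule L_grass)
  have pq: "\<And>x. psi (psi' x) = x" unfolding psi_def psi'_def by (rule Lmap_inv(2)[OF t1])
  have qp: "\<And>x. psi' (psi x) = x" unfolding psi_def psi'_def by (rule Lmap_inv(1)[OF t1])
  have comm: "\<And>x. x \<in> grass \<Longrightarrow> psi (phi0 x) = sig (psi x)"
    unfolding psi_def phi0_def sig_def by (rule Lmap_comm[OF t1 todd])
  have negc: "\<And>x. psi (gneg x) = gneg (psi x)" unfolding psi_def by (rule Lmap_neg)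
  have bij: "bij_betw psi grass grass"
    by (rule bij_betw_byWitness[where f'=psi']) (auto simp: pq qp psi_g psi'_g)
  show ?thesis
  proof (intro conjI allI impI)
    show "\<exists>phi :: (nat set \<Rightarrow> 'a) \<Rightarrow> (nat set \<Rightarrow> 'a).
            grass_endo phi \<and>
            (\<forall>n. 1 \<le> n \<and> n \<le> k \<longrightarrow> phi (gen n) = gen n) \<and>
            (\<forall>n. k + 1 \<le> n \<and> n \<le> k + t \<longrightarrow> phi (gen n) = gneg (gen n)) \<and>
            (\<forall>n. k + t < n \<longrightarrow>
               phi (gen n) = gadd (gneg (gen n)) (gsmult 2 (gmult (gprod [1..<k+t+1]) (gen n))))"
      using endo0 G1 G2 G3 by blast
  next
    fix phi :: "(nat set \<Rightarrow> 'a) \<Rightarrow> (nat set \<Rightarrow> 'a)"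
    assume H: "grass_endo phi \<and>
            (\<forall>n. 1 \<le> n \<and> n \<le> k \<longrightarrow> phi (gen n) = gen n) \<and>
            (\<forall>n. k + 1 \<le> n \<and> n \<le> k + t \<longrightarrow> phi (gen n) = gneg (gen n)) \<and>
            (\<forall>n. k + t < n \<longrightarrow>
               phi (gen n) = gadd (gneg (gen n)) (gsmult 2 (gmult (gprod [1..<k+t+1]) (gen n))))"
    have gen_eq: "phi (gen n) = phi0 (gen n)" if "n \<ge> 1" for n
    proof -
      consider "n \<le> k" | "k + 1 \<le> n \<and> n \<le> k + t" | "k + t < n" by linarith
      then show ?thesis using H G1 G2 G3 that by cases auto
    qed
    have eq: "\<And>x. x \<in> grass \<Longrightarrow> phi x = phi0 x"
      using endo_unique[OF _ endo0 gen_eq] H by blast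
    have E0: "Ephi0 phi = {x \<in> grass. phi0 x = (\<lambda>y. y) x}"
      unfolding Ephi0_def using eq by auto
    have E1: "Ephi1 phi = {x \<in> grass. phi0 x = gneg x}"
      unfolding Ephi1_def using eq by auto
    have K0: "Ek0 k = {x \<in> grass. sig x = (\<lambda>y. y) x}"
      unfolding sig_def using sigma_Ek0[of k t] by simp
    have K1: "Ek1 k = {x \<in> grass. sig x = gneg x}"
      unfolding sig_def using sigma_Ek1[of k t] by simp
    have I0: "psi ` Ephi0 phi = Ek0 k" unfolding E0 K0
      by (rule conj_image[where psi'=psi']) (auto simp: psi_g psi'_g pq qp phi0_g comm)
    have I1: "psi ` Ephi1 phi = Ek1 k" unfolding E1 K1
      by (rule conj_image[where psi'=psi']) (auto simp: psi_g psi'_g pq qp phi0_g comm negc gneg_grass)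
    show "\<exists>psi. graded_iso (Ephi0 phi) (Ephi1 phi) (Ek0 k) (Ek1 k) psi"
      unfolding graded_iso_def using endo_psi bij I0 I1 by blast
  qed
qed

end
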